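(* Let $m\ge2$. Let $\mathcal K_{\rm sym}$ be the set of maps $K:\{0,1\}^m\to\{\pm1\}$ with $K(x_1,x_2,\dots,x_m)=K(1-x_1,x_2,\dots,x_m)$ for all $x$. Let $\mathcal Z$ be the set of pairs $(a,q)$, $q\in\{0,1\}^m$, $a=(a_1,\dots,a_m)$ with $a_i:X_i\to\{\pm1\}$, such that there is $K\in\mathcal K_{\rm sym}$ with $a_i=K|_{X_i}$ for all $i$, and $\prod_{x\in X_1}a_1(x)=(-1)^{q_1}$. Define $P(a|q)=2^{-(2^{m-1}-1)}$ if $(a,q)\in\mathcal Z$ and $P(a|q)=0$ otherwise. Then $P$ is a no-signalling correlation (for each $q$, $P(\cdot|q)$ is a probability distribution, and for each $i$, $\sum_{a_i}P(a|q)$ does not depend on $q_i$), and every $(a,q)$ with $P(a|q)>0$ wins $\mathrm{HC}_m$; consequently $P$ wins $\mathrm{HC}_m$ with probability $1$.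
   Context: The $m$-player Hypercube game $\mathrm{HC}_m$: the question $q=(q_1,\dots,q_m)\in\{0,1\}^m$ is uniformly random and player $i$ receives $q_i$. Player $i$ must answer a function $a_i:X_i\to\{+1,-1\}$ where $X_i=\{x\in\{0,1\}^m: x_i=q_i\}$. The players win iff (Parity) $\prod_{x\in X_1}a_1(x)=(-1)^{q_1}$ and $\prod_{x\in X_i}a_i(x)=1$ for all $i\ge2$; and (Consistency) $a_i(x)=a_j(x)$ for all $i\ne j$ and all $x\in X_i\cap X_j$. *)

theory Defs
  imports "HOL-Library.FuncSet" Complex_Main
begin

text \<open>Bit strings in {0,1}^m are boolean lists of length m (True = 1).
  Players are indexed 0..m-1; the paper's player 1 is index 0.\<close>

definition cube :: "nat \<Rightarrow> bool list set" where
  "cube m = {x. length x = m}"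

definition Xset :: "nat \<Rightarrow> nat \<Rightarrow> bool \<Rightarrow> bool list set" where
  "Xset m i c = {x \<in> cube m. x ! i = c}"

definition answers :: "nat \<Rightarrow> nat \<Rightarrow> bool \<Rightarrow> (bool list \<Rightarrow> int) set" where
  "answers m i c = Xset m i c \<rightarrow>\<^sub>E {1, -1}"

definition answer_tuples :: "nat \<Rightarrow> bool list \<Rightarrow> (nat \<Rightarrow> bool list \<Rightarrow> int) set" where
  "answer_tuples m q = (\<Pi>\<^sub>E i\<in>{..<m}. answers m i (q ! i))"

definition sgn_bit :: "bool \<Rightarrow> int" where
  "sgn_bit b = (if b then -1 else 1)"

definition win :: "nat \<Rightarrow> bool list \<Rightarrow> (nat \<Rightarrow> bool list \<Rightarrow> int) \<Rightarrow> bool" where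
  "win m q a \<longleftrightarrow>
     (\<Prod>x\<in>Xset m 0 (q ! 0). a 0 x) = sgn_bit (q ! 0) \<and>
     (\<forall>i\<in>{1..<m}. (\<Prod>x\<in>Xset m i (q ! i). a i x) = 1) \<and>
     (\<forall>i<m. \<forall>j<m. i \<noteq> j \<longrightarrow>
        (\<forall>x \<in> Xset m i (q ! i) \<inter> Xset m j (q ! j). a i x = a j x))"

definition Ksym :: "nat \<Rightarrow> (bool list \<Rightarrow> int) set" where
  "Ksym m = {K \<in> cube m \<rightarrow>\<^sub>E {1, -1}. \<forall>x\<in>cube m. K x = K (x[0 := \<not> x ! 0])}"

definition Zset :: "nat \<Rightarrow> ((nat \<Rightarrow> bool list \<Rightarrow> int) \<times> bool list) set" where
  "Zset m = {(a, q). q \<in> cube m \<and> a \<in> answer_tuples m q \<and>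
      (\<exists>K\<in>Ksym m. \<forall>i<m. a i = restrict K (Xset m i (q ! i))) \<and>
      (\<Prod>x\<in>Xset m 0 (q ! 0). a 0 x) = sgn_bit (q ! 0)}"

definition Pcorr :: "nat \<Rightarrow> (nat \<Rightarrow> bool list \<Rightarrow> int) \<Rightarrow> bool list \<Rightarrow> real" where
  "Pcorr m a q = (if (a, q) \<in> Zset m then 1 / 2 ^ (2 ^ (m - 1) - 1) else 0)"

end

theory Submission
  imports Defs
begin

definition flip0 :: "bool list \<Rightarrow> bool list" where
  "flip0 x = x[0 := \<not> x ! 0]"

lemma finite_cube: "finite (cube n)"
  using finite_lists_length_eq[of "UNIV::bool set" n] by (simp add: cube_def)

lemma card_cube: "card (cube n) = 2 ^ n"
  using card_lists_length_eq[of "UNIV::bool set" n] by (simp add: cube_def)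

lemma finite_Xset: "finite (Xset m i c)"
  using finite_cube[of m] unfolding Xset_def by auto

lemma Xset_sub: "Xset m i c \<subseteq> cube m" unfolding Xset_def by auto

lemma flip0_cube: "x \<in> cube m \<Longrightarrow> flip0 x \<in> cube m"
  by (simp add: flip0_def cube_def)
lemma flip0_nth0: "length x > 0 \<Longrightarrow> flip0 x ! 0 = (\<not> x ! 0)"
  by (simp add: flip0_def)
lemma flip0_nth: "j \<noteq> 0 \<Longrightarrow> flip0 x ! j = x ! j"
  by (simp add: flip0_def)
lemma flip0_flip0: "length x > 0 \<Longrightarrow> flip0 (flip0 x) = x"
  by (simp add: flip0_def)

lemma Ksym_iff: "K \<in> Ksym m \<longleftrightarrow> K \<in> cube m \<rightarrow>\<^sub>E {1,-1} \<and> (\<forall>x\<in>cube m. K x = K (flip0 x))"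
  by (simp add: Ksym_def flip0_def)

lemma Xset0_eq: "m \<ge> 1 \<Longrightarrow> Xset m 0 c = (Cons c) ` cube (m-1)"
proof
  assume m: "m \<ge> 1"
  show "Xset m 0 c \<subseteq> (Cons c) ` cube (m-1)"
  proof
    fix x assume "x \<in> Xset m 0 c"
    then have "length x = m" "x ! 0 = c" by (auto simp: Xset_def cube_def)
    then show "x \<in> (Cons c) ` cube (m-1)" using m
      by (cases x) (auto simp: cube_def)
  qed
  show "(Cons c) ` cube (m-1) \<subseteq> Xset m 0 c"
    using m by (auto simp: Xset_def cube_def)
qed

lemma card_Xset0: "m \<ge> 1 \<Longrightarrow> card (Xset m 0 c) = 2 ^ (m-1)"
  by (simp add: Xset0_eq card_image card_cube)

lemma prod_pm1: assumes "\<forall>x\<in>A. g x \<in> {1::int,-1}" shows "prod g A \<in> {1,-1}"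
proof (cases "finite A")
  case True
  from True assms show ?thesis
    by (induction A rule: finite_induct) auto
qed simp

lemma pm1_sq: "(p::int) \<in> {1,-1} \<Longrightarrow> p * p = 1" by auto

lemma restrict_pm: "K \<in> cube m \<rightarrow>\<^sub>E {1,-1} \<Longrightarrow> restrict K (Xset m i c) \<in> answers m i c"
  unfolding answers_def by (auto simp: PiE_iff Xset_def)

lemma Ksym_ext:
  assumes "m \<ge> 1" "K1 \<in> Ksym m" "K2 \<in> Ksym m" "\<forall>x\<in>Xset m 0 c. K1 x = K2 x"
  shows "K1 = K2"
proof
  fix x
  show "K1 x = K2 x"
  proof (cases "x \<in> cube m")
    case True
    then have l: "length x > 0" using assms(1) by (simp add: cube_def)
    show ?thesis
    proof (cases "x ! 0 = c")
      case True
      then show ?thesis using \<open>x \<in> cube m\<close> assms(4) by (simp add: Xset_def)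
    next
      case False
      then have "flip0 x \<in> Xset m 0 c" using \<open>x \<in> cube m\<close> l
        by (simp add: Xset_def flip0_cube flip0_nth0)
      have "K1 x = K1 (flip0 x)" "K2 x = K2 (flip0 x)"
        using assms(2,3) \<open>x \<in> cube m\<close> unfolding Ksym_iff by blast+
      then show ?thesis using \<open>flip0 x \<in> Xset m 0 c\<close> assms(4) by simp
    qed
  next
    case False
    then show ?thesis using assms(2,3) unfolding Ksym_iff by (metis PiE_arb)
  qed
qed

lemma card_parity:
  assumes "finite A" "a0 \<in> A" "s \<in> {1::int,-1}"
  shows "card {g \<in> A \<rightarrow>\<^sub>E {1::int,-1}. prod g A = s} = 2 ^ (card A - 1)"
proof -
  let ?G = "{g \<in> A \<rightarrow>\<^sub>E {1::int,-1}. prod g A = s}"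
  let ?B = "A - {a0}"
  let ?f = "\<lambda>g. restrict g ?B"
  let ?f' = "\<lambda>h. h(a0 := s * prod h ?B)"
  have pr: "prod g A = g a0 * prod g ?B" for g :: "'a \<Rightarrow> int"
    using assms(1,2) by (simp add: prod.remove)
  have bij: "bij_betw ?f ?G (?B \<rightarrow>\<^sub>E {1,-1})"
  proof (rule bij_betw_byWitness)
    show "\<forall>g\<in>?G. ?f' (?f g) = g"
    proof
      fix g assume g: "g \<in> ?G"
      have P: "prod g ?B \<in> {1,-1}" using g by (intro prod_pm1) (auto simp: PiE_iff)
      have "prod (?f g) ?B = prod g ?B" by (rule prod.cong) auto
      moreover have "s * prod g ?B = g a0"
      proof -
        have "s = g a0 * prod g ?B" using g pr[of g] by simp
        then have "s * prod g ?B = g a0 * (prod g ?B * prod g ?B)" by (simp add: algebra_simps)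
        then show ?thesis using pm1_sq[OF P] by simp
      qed
      ultimately have e: "s * prod (?f g) ?B = g a0" by simp
      show "?f' (?f g) = g"
      proof
        fix x show "?f' (?f g) x = g x"
        proof (cases "x = a0")
          case True then show ?thesis by (simp only: True fun_upd_same e)
        next
          case False
          have "g \<in> A \<rightarrow>\<^sub>E {1,-1}" using g by blast
          then show ?thesis using False by (cases "x \<in> A") (simp_all add: PiE_arb[of g A])
        qed
      qed
    qed
    show "\<forall>h\<in>?B \<rightarrow>\<^sub>E {1,-1}. ?f (?f' h) = h"
    proof
      fix h :: "'a \<Rightarrow> int" assume h: "h \<in> ?B \<rightarrow>\<^sub>E {1,-1}"
      show "?f (?f' h) = h"
      proof
        fix x show "?f (?f' h) x = h x" using h by (cases "x \<in> ?B") (simp_all add: PiE_arb[of h ?B])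
      qed
    qed
    show "?f ` ?G \<subseteq> ?B \<rightarrow>\<^sub>E {1,-1}"
    proof (rule image_subsetI)
      fix g assume "g \<in> ?G"
      then have "g \<in> A \<rightarrow>\<^sub>E {1,-1}" by blast
      then show "?f g \<in> ?B \<rightarrow>\<^sub>E {1,-1}" unfolding restrict_PiE_iff
        by (auto dest: PiE_mem)
    qed
    show "?f' ` (?B \<rightarrow>\<^sub>E {1,-1}) \<subseteq> ?G"
    proof
      fix g assume "g \<in> ?f' ` (?B \<rightarrow>\<^sub>E {1,-1})"
      then obtain h where h: "h \<in> ?B \<rightarrow>\<^sub>E {1,-1}" and gh: "g = ?f' h" by blast
      have P: "prod h ?B \<in> {1,-1}" using h by (intro prod_pm1) (auto simp: PiE_iff)
      have v: "s * prod h ?B \<in> {1,-1}" using P assms(3) by auto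
      have "prod g ?B = prod h ?B" unfolding gh by (rule prod.cong) auto
      then have "prod g A = s * prod h ?B * prod h ?B" using pr[of g] gh by simp
      also have "\<dots> = s" using pm1_sq[OF P] by (simp add: mult.assoc)
      finally have "prod g A = s" .
      moreover have "g \<in> A \<rightarrow>\<^sub>E {1,-1}" using h v assms(2) unfolding gh
        by (auto simp: PiE_iff extensional_def)
      ultimately show "g \<in> ?G" by simp
    qed
  qed
  have "card ?G = card (?B \<rightarrow>\<^sub>E {1::int,-1})" using bij_betw_same_card[OF bij] .
  also have "\<dots> = 2 ^ card ?B" using assms(1) by (simp add: card_PiE numeral_2_eq_2)
  also have "card ?B = card A - 1" using assms by simp
  finally show ?thesis .
qed


lemma sgn_bit_pm: "sgn_bit b \<in> {1,-1}" by (simp add: sgn_bit_def)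

lemma prod_restrict_same: "prod (restrict K X) X = prod K X"
  by (rule prod.cong) auto

lemma card_Ksym_parity:
  assumes m: "m \<ge> 1"
  shows "card {K \<in> Ksym m. prod K (Xset m 0 c) = sgn_bit c} = 2 ^ (2^(m-1) - 1)"
proof -
  let ?X0 = "Xset m 0 c"
  let ?S = "{K \<in> Ksym m. prod K ?X0 = sgn_bit c}"
  let ?G = "{g \<in> ?X0 \<rightarrow>\<^sub>E {1::int,-1}. prod g ?X0 = sgn_bit c}"
  define E where "E g = (\<lambda>x. if x \<in> cube m then g (if x ! 0 = c then x else flip0 x) else undefined)"
    for g :: "bool list \<Rightarrow> int"
  have inX0: "(if x ! 0 = c then x else flip0 x) \<in> ?X0" if "x \<in> cube m" for x
  proof -
    have "length x > 0" using that m by (simp add: cube_def)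
    then show ?thesis using that by (auto simp: Xset_def flip0_cube flip0_nth0)
  qed
  have bij: "bij_betw (\<lambda>K. restrict K ?X0) ?S ?G"
  proof (rule bij_betw_byWitness[where f'=E])
    show "\<forall>K\<in>?S. E (restrict K ?X0) = K"
    proof
      fix K assume K: "K \<in> ?S"
      then have K1: "K \<in> cube m \<rightarrow>\<^sub>E {1,-1}" and K2: "\<forall>x\<in>cube m. K x = K (flip0 x)"
        by (auto simp: Ksym_iff)
      show "E (restrict K ?X0) = K"
      proof
        fix x show "E (restrict K ?X0) x = K x"
        proof (cases "x \<in> cube m")
          case True
          then show ?thesis using inX0[OF True] K2 True by (auto simp: E_def)
        next
          case False
          then show ?thesis using PiE_arb[OF K1 False] by (simp add: E_def)
        qed
      qed
    qed
    show "\<forall>g\<in>?G. restrict (E g) ?X0 = g"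
    proof
      fix g assume g: "g \<in> ?G"
      then have g1: "g \<in> ?X0 \<rightarrow>\<^sub>E {1,-1}" by blast
      show "restrict (E g) ?X0 = g"
      proof
        fix x show "restrict (E g) ?X0 x = g x"
        proof (cases "x \<in> ?X0")
          case True then show ?thesis by (auto simp: E_def Xset_def)
        next
          case False then show ?thesis using PiE_arb[OF g1 False] by simp
        qed
      qed
    qed
    show "(\<lambda>K. restrict K ?X0) ` ?S \<subseteq> ?G"
    proof (rule image_subsetI)
      fix K assume K: "K \<in> ?S"
      then have "restrict K ?X0 \<in> answers m 0 c" using restrict_pm by (auto simp: Ksym_iff)
      then show "restrict K ?X0 \<in> ?G" using K by (simp add: answers_def prod_restrict_same)
    qed
    show "E ` ?G \<subseteq> ?S"
    proof (rule image_subsetI)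
      fix g assume g: "g \<in> ?G"
      then have g1: "g \<in> ?X0 \<rightarrow>\<^sub>E {1,-1}" by blast
      have a: "E g \<in> cube m \<rightarrow>\<^sub>E {1,-1}"
      proof -
        have "E g x \<in> {1,-1}" if "x \<in> cube m" for x
          using PiE_mem[OF g1 inX0[OF that]] that by (simp add: E_def)
        moreover have "E g \<in> extensional (cube m)" by (simp add: E_def extensional_def)
        ultimately show ?thesis by (simp add: PiE_iff)
      qed
      have b: "E g x = E g (flip0 x)" if x: "x \<in> cube m" for x
      proof -
        have l: "length x > 0" using x m by (simp add: cube_def)
        have fx: "flip0 x \<in> cube m" using x by (rule flip0_cube)
        show ?thesis using x fx flip0_nth0[OF l] flip0_flip0[OF l] by (auto simp: E_def)
      qed
      have "prod (E g) ?X0 = prod g ?X0"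
        by (rule prod.cong) (auto simp: E_def Xset_def)
      then show "E g \<in> ?S" using a b g by (simp add: Ksym_iff)
    qed
  qed
  have ne: "?X0 \<noteq> {}" using card_Xset0[OF m, of c] by auto
  then obtain a0 where a0: "a0 \<in> ?X0" by blast
  have "card ?S = card ?G" using bij_betw_same_card[OF bij] .
  also have "\<dots> = 2 ^ (card ?X0 - 1)"
    by (rule card_parity[OF finite_Xset a0 sgn_bit_pm])
  finally show ?thesis using card_Xset0[OF m, of c] by simp
qed

lemma Zset_slice_card:
  assumes m: "m \<ge> 1" and q: "q \<in> cube m"
  shows "card {a \<in> answer_tuples m q. (a, q) \<in> Zset m} = 2 ^ (2^(m-1) - 1)"
proof -
  let ?X0 = "Xset m 0 (q!0)"
  let ?S = "{K \<in> Ksym m. prod K ?X0 = sgn_bit (q!0)}"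
  define \<Phi> where "\<Phi> K = (\<lambda>i\<in>{..<m}. restrict K (Xset m i (q!i)))" for K :: "bool list \<Rightarrow> int"
  have m0: "0 < m" using m by simp
  have eq: "{a \<in> answer_tuples m q. (a, q) \<in> Zset m} = \<Phi> ` ?S"
  proof (intro equalityI subsetI)
    fix a assume "a \<in> {a \<in> answer_tuples m q. (a, q) \<in> Zset m}"
    then have a: "a \<in> answer_tuples m q" and Z: "(a, q) \<in> Zset m" by auto
    from Z obtain K where K: "K \<in> Ksym m" "\<forall>i<m. a i = restrict K (Xset m i (q!i))"
      and par: "prod (a 0) ?X0 = sgn_bit (q!0)" unfolding Zset_def by auto
    have a1: "a \<in> (\<Pi>\<^sub>E i\<in>{..<m}. answers m i (q!i))" using a by (simp add: answer_tuples_def)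
    have "a = \<Phi> K"
    proof
      fix i show "a i = \<Phi> K i"
      proof (cases "i < m")
        case True then show ?thesis using K(2) by (simp add: \<Phi>_def)
      next
        case False then show ?thesis using PiE_arb[OF a1, of i] by (simp add: \<Phi>_def)
      qed
    qed
    moreover have "prod K ?X0 = sgn_bit (q!0)" using par K(2) m0 by (simp add: prod_restrict_same)
    ultimately show "a \<in> \<Phi> ` ?S" using K(1) by blast
  next
    fix a assume "a \<in> \<Phi> ` ?S"
    then obtain K where K: "K \<in> Ksym m" "prod K ?X0 = sgn_bit (q!0)" and aK: "a = \<Phi> K" by blast
    have K1: "K \<in> cube m \<rightarrow>\<^sub>E {1,-1}" using K(1) by (simp add: Ksym_iff)
    have at: "a \<in> answer_tuples m q"
      unfolding answer_tuples_def aK \<Phi>_def restrict_PiE_iff using restrict_pm[OF K1] by blast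
    have "(a, q) \<in> Zset m" unfolding Zset_def
      using q at K m0 by (auto simp: aK \<Phi>_def prod_restrict_same)
    then show "a \<in> {a \<in> answer_tuples m q. (a, q) \<in> Zset m}" using at by simp
  qed
  have inj: "inj_on \<Phi> ?S"
  proof (rule inj_onI)
    fix K1 K2 assume K1: "K1 \<in> ?S" and K2: "K2 \<in> ?S" and e: "\<Phi> K1 = \<Phi> K2"
    have "\<Phi> K1 0 = \<Phi> K2 0" using e by simp
    then have "restrict K1 ?X0 = restrict K2 ?X0" using m0 by (simp add: \<Phi>_def)
    then have "\<forall>x\<in>?X0. K1 x = K2 x" by (metis restrict_apply')
    then show "K1 = K2" using Ksym_ext[OF m] K1 K2 by blast
  qed
  show ?thesis unfolding eq card_image[OF inj] using card_Ksym_parity[OF m] .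
qed

definition pt :: "bool list \<Rightarrow> bool \<Rightarrow> bool list" where
  "pt q c = c # map Not (tl q)"

definition Uset :: "nat \<Rightarrow> bool list \<Rightarrow> bool list set" where
  "Uset m q = {x. \<exists>j\<in>{1..<m}. x ! j = q ! j}"

lemma pt_nth: "q \<in> cube m \<Longrightarrow> j \<in> {1..<m} \<Longrightarrow> pt q c ! j = (\<not> q ! j)"
  by (cases j) (auto simp: pt_def cube_def nth_tl)

lemma pt_cube: "m \<ge> 1 \<Longrightarrow> q \<in> cube m \<Longrightarrow> pt q c \<in> cube m"
  by (simp add: pt_def cube_def)

lemma pt_X0: "m \<ge> 1 \<Longrightarrow> q \<in> cube m \<Longrightarrow> pt q c \<in> Xset m 0 c"
  using pt_cube by (simp add: Xset_def pt_def)

lemma pt_notU: "q \<in> cube m \<Longrightarrow> pt q c \<notin> Uset m q"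
  using pt_nth by (auto simp: Uset_def)

lemma notU_pt:
  assumes "m \<ge> 1" "q \<in> cube m" "x \<in> cube m" "x \<notin> Uset m q"
  shows "x = pt q (x ! 0)"
proof (rule nth_equalityI)
  show "length x = length (pt q (x ! 0))" using assms by (simp add: pt_def cube_def)
  fix j assume j: "j < length x"
  show "x ! j = pt q (x ! 0) ! j"
  proof (cases "j = 0")
    case True then show ?thesis by (simp add: pt_def)
  next
    case False
    then have jj: "j \<in> {1..<m}" using j assms(3) by (auto simp: cube_def)
    then have "x ! j \<noteq> q ! j" using assms(4) by (auto simp: Uset_def)
    then show ?thesis using pt_nth[OF assms(2) jj] by auto
  qed
qed

lemma X0_split:
  assumes "m \<ge> 1" "q \<in> cube m"
  shows "Xset m 0 c = insert (pt q c) (Xset m 0 c \<inter> Uset m q)"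
proof -
  have "x \<in> Xset m 0 c \<Longrightarrow> x \<notin> Uset m q \<Longrightarrow> x = pt q c" for x
    using notU_pt[OF assms, of x] by (auto simp: Xset_def)
  then show ?thesis using pt_X0[OF assms] by blast
qed

lemma prod_X0:
  assumes "m \<ge> 1" "q \<in> cube m"
  shows "prod K (Xset m 0 c) = K (pt q c) * prod K (Xset m 0 c \<inter> Uset m q)"
  by (subst X0_split[OF assms]) (simp add: finite_Xset pt_notU[OF assms(2)])

lemma Xj_U: "j \<in> {1..<m} \<Longrightarrow> Xset m j (q!j) \<subseteq> Uset m q"
  by (auto simp: Xset_def Uset_def)

lemma flip0_U: "flip0 x \<in> Uset m q \<longleftrightarrow> x \<in> Uset m q"
  by (auto simp: Uset_def flip0_nth)

lemma prod_X0_flip: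
  assumes m: "m \<ge> 1" and K: "K \<in> Ksym m"
  shows "prod K (Xset m 0 (\<not> c)) = prod K (Xset m 0 c)"
proof -
  have s: "\<forall>x\<in>cube m. K x = K (flip0 x)" using K by (simp add: Ksym_iff)
  have l: "x \<in> Xset m 0 d \<Longrightarrow> length x > 0" for x d using m by (simp add: Xset_def cube_def)
  show ?thesis
  proof (rule prod.reindex_bij_witness[where i=flip0 and j=flip0])
    fix a assume a: "a \<in> Xset m 0 (\<not> c)"
    show "flip0 (flip0 a) = a" using flip0_flip0[OF l[OF a]] .
    show "flip0 a \<in> Xset m 0 c" using a l[OF a]
      by (simp add: Xset_def flip0_cube flip0_nth0)
    show "K (flip0 a) = K a" using s a by (simp add: Xset_def)
  next
    fix b assume b: "b \<in> Xset m 0 c"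
    show "flip0 (flip0 b) = b" using flip0_flip0[OF l[OF b]] .
    show "flip0 b \<in> Xset m 0 (\<not> c)" using b l[OF b]
      by (simp add: Xset_def flip0_cube flip0_nth0)
  qed
qed

lemma prod_Xi_sym:
  assumes m: "m \<ge> 1" and i: "i \<noteq> 0" and K: "K \<in> Ksym m"
  shows "prod K (Xset m i c) = 1"
proof -
  have s: "\<forall>x\<in>cube m. K x = K (flip0 x)" using K by (simp add: Ksym_iff)
  have K1: "K \<in> cube m \<rightarrow>\<^sub>E {1,-1}" using K by (simp add: Ksym_iff)
  let ?A = "Xset m i c \<inter> {x. x ! 0}"
  let ?B = "Xset m i c \<inter> {x. \<not> x ! 0}"
  have l: "x \<in> Xset m i c \<Longrightarrow> length x > 0" for x using m by (simp add: Xset_def cube_def)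
  have u: "Xset m i c = ?A \<union> ?B" by auto
  have "prod K (Xset m i c) = prod K ?A * prod K ?B"
    by (subst u, rule prod.union_disjoint) (auto simp: finite_Xset)
  moreover have "prod K ?B = prod K ?A"
  proof (rule prod.reindex_bij_witness[where i=flip0 and j=flip0])
    fix a assume a: "a \<in> ?B"
    show "flip0 (flip0 a) = a" using a flip0_flip0[OF l] by blast
    show "flip0 a \<in> ?A" using a l[of a] i
      by (simp add: Xset_def flip0_cube flip0_nth0 flip0_nth)
    show "K (flip0 a) = K a" using s a by (simp add: Xset_def)
  next
    fix b assume b: "b \<in> ?A"
    show "flip0 (flip0 b) = b" using b flip0_flip0[OF l] by blast
    show "flip0 b \<in> ?B" using b l[of b] i
      by (simp add: Xset_def flip0_cube flip0_nth0 flip0_nth)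
  qed
  moreover have "prod K ?A \<in> {1,-1}"
    by (rule prod_pm1) (use K1 in \<open>auto simp: Xset_def dest: PiE_mem\<close>)
  ultimately show ?thesis using pm1_sq by simp
qed

lemma Zset_iff: "(a, q) \<in> Zset m \<longleftrightarrow> q \<in> cube m \<and> a \<in> answer_tuples m q \<and>
      (\<exists>K\<in>Ksym m. \<forall>i<m. a i = restrict K (Xset m i (q ! i))) \<and>
      (\<Prod>x\<in>Xset m 0 (q ! 0). a 0 x) = sgn_bit (q ! 0)"
  by (simp add: Zset_def)

lemma Zset_build:
  assumes q': "q' \<in> cube m" and i: "i < m" and K: "K \<in> Ksym m"
    and bj: "\<forall>j<m. j \<noteq> i \<longrightarrow> b j = restrict K (Xset m j (q' ! j))"
    and bext: "\<forall>j. m \<le> j \<longrightarrow> b j = undefined"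
    and par: "prod ((b(i := restrict K (Xset m i (q' ! i)))) 0) (Xset m 0 (q' ! 0)) = sgn_bit (q' ! 0)"
  shows "restrict K (Xset m i (q' ! i)) \<in> answers m i (q' ! i) \<and>
         (b(i := restrict K (Xset m i (q' ! i))), q') \<in> Zset m"
proof -
  let ?f = "restrict K (Xset m i (q' ! i))"
  have K1: "K \<in> cube m \<rightarrow>\<^sub>E {1,-1}" using K by (simp add: Ksym_iff)
  have f: "?f \<in> answers m i (q' ! i)" using restrict_pm[OF K1] .
  have all: "\<forall>j<m. (b(i := ?f)) j = restrict K (Xset m j (q' ! j))" using bj by auto
  have at: "b(i := ?f) \<in> answer_tuples m q'"
    unfolding answer_tuples_def PiE_iff
  proof (intro conjI ballI)
    fix j assume "j \<in> {..<m}"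
    then show "(b(i := ?f)) j \<in> answers m j (q' ! j)" using all restrict_pm[OF K1] by auto
  next
    show "b(i := ?f) \<in> extensional {..<m}" using bext i by (auto simp: extensional_def)
  qed
  show ?thesis using f at all K q' par by (auto simp: Zset_iff)
qed

lemma F_unique:
  assumes m: "m \<ge> 2" and i: "i < m" and q: "q \<in> cube m"
    and f1: "(b(i := f1), q) \<in> Zset m" and f2: "(b(i := f2), q) \<in> Zset m"
  shows "f1 = f2"
proof -
  have m1: "m \<ge> 1" using m by simp
  let ?X0 = "Xset m 0 (q!0)"
  obtain K1 where K1: "K1 \<in> Ksym m" "\<forall>j<m. (b(i := f1)) j = restrict K1 (Xset m j (q!j))"
    and p1: "prod ((b(i := f1)) 0) ?X0 = sgn_bit (q!0)" using f1 by (auto simp: Zset_iff)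
  obtain K2 where K2: "K2 \<in> Ksym m" "\<forall>j<m. (b(i := f2)) j = restrict K2 (Xset m j (q!j))"
    and p2: "prod ((b(i := f2)) 0) ?X0 = sgn_bit (q!0)" using f2 by (auto simp: Zset_iff)
  have bK: "b j = restrict K1 (Xset m j (q!j)) \<and> b j = restrict K2 (Xset m j (q!j))"
    if "j < m" "j \<noteq> i" for j
    using K1(2) K2(2) that by (metis fun_upd_other)
  have agree: "\<forall>x\<in>?X0. K1 x = K2 x"
  proof (cases "i = 0")
    case False
    then have "restrict K1 ?X0 = restrict K2 ?X0" using bK[of 0] m by auto
    then show ?thesis by (metis restrict_apply')
  next
    case True
    have U: "K1 x = K2 x" if x: "x \<in> ?X0 \<inter> Uset m q" for x
    proof -
      obtain j where j: "j \<in> {1..<m}" "x ! j = q ! j" using x by (auto simp: Uset_def)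
      have xj: "x \<in> Xset m j (q!j)" using x j by (auto simp: Xset_def)
      have "restrict K1 (Xset m j (q!j)) = restrict K2 (Xset m j (q!j))"
        using bK[of j] j True by auto
      then show ?thesis using xj by (metis restrict_apply')
    qed
    have P: "prod K1 (?X0 \<inter> Uset m q) = prod K2 (?X0 \<inter> Uset m q)"
      by (rule prod.cong) (use U in auto)
    have K1pm: "K1 \<in> cube m \<rightarrow>\<^sub>E {1,-1}" using K1(1) by (simp add: Ksym_iff)
    have Pne: "prod K1 (?X0 \<inter> Uset m q) \<noteq> 0"
    proof -
      have "prod K1 (?X0 \<inter> Uset m q) \<in> {1,-1}"
        by (rule prod_pm1) (use K1pm in \<open>auto simp: Xset_def dest: PiE_mem\<close>)
      then show ?thesis by auto
    qed
    have e1: "prod K1 ?X0 = sgn_bit (q!0)"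
    proof -
      have "0 < m" using m by simp
      with K1(2) have "(b(i := f1)) 0 = restrict K1 ?X0" by blast
      then show ?thesis using p1 by (simp add: prod_restrict_same)
    qed
    have e2: "prod K2 ?X0 = sgn_bit (q!0)"
    proof -
      have "0 < m" using m by simp
      with K2(2) have "(b(i := f2)) 0 = restrict K2 ?X0" by blast
      then show ?thesis using p2 by (simp add: prod_restrict_same)
    qed
    have "K1 (pt q (q!0)) * prod K1 (?X0 \<inter> Uset m q) = K2 (pt q (q!0)) * prod K1 (?X0 \<inter> Uset m q)"
      using e1 e2 prod_X0[OF m1 q, of K1 "q!0"] prod_X0[OF m1 q, of K2 "q!0"] P by simp
    then have pt: "K1 (pt q (q!0)) = K2 (pt q (q!0))" using Pne by simp
    show ?thesis
    proof
      fix x assume x: "x \<in> ?X0"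
      then have "x = pt q (q!0) \<or> x \<in> ?X0 \<inter> Uset m q" using X0_split[OF m1 q, of "q!0"] by blast
      then show "K1 x = K2 x" using pt U by blast
    qed
  qed
  have KK: "K1 = K2" using Ksym_ext[OF m1 K1(1) K2(1) agree] .
  have "f1 = (b(i := f1)) i" by simp
  also have "\<dots> = restrict K1 (Xset m i (q!i))" using K1(2) i by blast
  also have "\<dots> = (b(i := f2)) i"
  proof -
    have e: "(b(i := f2)) i = restrict K2 (Xset m i (q!i))" using K2(2) i by blast
    show ?thesis by (simp only: e KK)
  qed
  also have "\<dots> = f2" by simp
  finally show "f1 = f2" .
qed

lemma F_transfer:
  assumes m: "m \<ge> 2" and i: "i < m" and q: "q \<in> cube m" and q': "q' \<in> cube m"
    and agr: "\<forall>j<m. j \<noteq> i \<longrightarrow> q ! j = q' ! j" and fl: "q' ! i = (\<not> q ! i)"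
    and f: "(b(i := f), q) \<in> Zset m"
  shows "\<exists>f'. f' \<in> answers m i (q' ! i) \<and> (b(i := f'), q') \<in> Zset m"
proof -
  have m1: "m \<ge> 1" using m by simp
  obtain K where K: "K \<in> Ksym m" "\<forall>j<m. (b(i := f)) j = restrict K (Xset m j (q!j))"
    and p: "prod ((b(i := f)) 0) (Xset m 0 (q!0)) = sgn_bit (q!0)"
    and at: "b(i := f) \<in> answer_tuples m q" using f by (auto simp: Zset_iff)
  have bj: "\<forall>j<m. j \<noteq> i \<longrightarrow> b j = restrict K (Xset m j (q'!j))"
  proof (intro allI impI)
    fix j assume j: "j < m" "j \<noteq> i"
    have "(b(i := f)) j = restrict K (Xset m j (q!j))" using K(2) j by blast
    moreover have "q ! j = q' ! j" using agr j by blast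
    ultimately show "b j = restrict K (Xset m j (q'!j))" using j by simp
  qed
  have bext: "\<forall>j. m \<le> j \<longrightarrow> b j = undefined"
  proof (intro allI impI)
    fix j assume j: "m \<le> j"
    have "j \<notin> {..<m}" using j by simp
    then have "(b(i := f)) j = undefined"
      using at unfolding answer_tuples_def by (rule PiE_arb[rotated])
    then show "b j = undefined" using i j by simp
  qed
  have m0: "0 < m" using m by simp
  have f0: "(b(i := f)) 0 = restrict K (Xset m 0 (q!0))" using K(2) m0 by blast
  have pK: "prod K (Xset m 0 (q!0)) = sgn_bit (q!0)" using p f0 by (simp add: prod_restrict_same)
  show ?thesis
  proof (cases "i = 0")
    case False
    have par: "prod ((b(i := restrict K (Xset m i (q' ! i)))) 0) (Xset m 0 (q' ! 0)) = sgn_bit (q' ! 0)"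
    proof -
      have "q' ! 0 = q ! 0" using agr m0 False by metis
      moreover have "(b(i := restrict K (Xset m i (q' ! i)))) 0 = (b(i := f)) 0" using False by simp
      ultimately show ?thesis using p by simp
    qed
    show ?thesis using Zset_build[OF q' i K(1) bj bext par] by blast
  next
    case True
    define K' where "K' x = (if x \<in> cube m then (if x \<in> Uset m q then K x else - K x) else undefined)" for x
    have Kpm: "K \<in> cube m \<rightarrow>\<^sub>E {1,-1}" and Ks: "\<forall>x\<in>cube m. K x = K (flip0 x)"
      using K(1) by (auto simp: Ksym_iff)
    have K'1: "K' \<in> cube m \<rightarrow>\<^sub>E {1,-1}"
      using Kpm by (auto simp: K'_def PiE_iff extensional_def)
    have K'2: "\<forall>x\<in>cube m. K' x = K' (flip0 x)"
      using Ks by (auto simp: K'_def flip0_U flip0_cube)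
    have K': "K' \<in> Ksym m" using K'1 K'2 by (simp add: Ksym_iff)
    have bj': "\<forall>j<m. j \<noteq> i \<longrightarrow> b j = restrict K' (Xset m j (q'!j))"
    proof (intro allI impI)
      fix j assume j: "j < m" "j \<noteq> i"
      then have j1: "j \<in> {1..<m}" using True by auto
      have "restrict K (Xset m j (q'!j)) = restrict K' (Xset m j (q'!j))"
      proof (rule restrict_ext)
        fix x assume "x \<in> Xset m j (q'!j)"
        then have "x \<in> Xset m j (q!j)" using agr j by simp
        then show "K x = K' x" using Xj_U[OF j1, of q] by (auto simp: K'_def Xset_def)
      qed
      then show "b j = restrict K' (Xset m j (q'!j))" using bj j by simp
    qed
    let ?Y = "Xset m 0 (q'!0)"
    have "prod K' ?Y = K' (pt q (q'!0)) * prod K' (?Y \<inter> Uset m q)"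
      by (rule prod_X0[OF m1 q])
    also have "K' (pt q (q'!0)) = - K (pt q (q'!0))"
      using pt_cube[OF m1 q] pt_notU[OF q] by (simp add: K'_def)
    also have "prod K' (?Y \<inter> Uset m q) = prod K (?Y \<inter> Uset m q)"
      by (rule prod.cong) (auto simp: K'_def Xset_def)
    finally have "prod K' ?Y = - (K (pt q (q'!0)) * prod K (?Y \<inter> Uset m q))" by simp
    also have "K (pt q (q'!0)) * prod K (?Y \<inter> Uset m q) = prod K ?Y"
      by (rule prod_X0[OF m1 q, symmetric])
    also have "prod K ?Y = prod K (Xset m 0 (q!0))"
      using prod_X0_flip[OF m1 K(1), of "q!0"] fl True by simp
    finally have "prod K' ?Y = sgn_bit (q'!0)" using pK fl True by (simp add: sgn_bit_def)
    then have par: "prod ((b(i := restrict K' (Xset m i (q' ! i)))) 0) ?Y = sgn_bit (q' ! 0)"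
      using True by (simp add: prod_restrict_same)
    show ?thesis using Zset_build[OF q' i K' bj' bext par] by blast
  qed
qed

lemma sum_if_const: "finite A \<Longrightarrow> (\<Sum>x\<in>A. if P x then (c::real) else 0) = real (card {x\<in>A. P x}) * c"
  by (simp add: sum.inter_filter[symmetric])

lemma finite_answers: "finite (answers m i c)"
  by (simp add: answers_def finite_PiE finite_Xset)

lemma finite_answer_tuples: "finite (answer_tuples m q)"
  by (simp add: answer_tuples_def finite_PiE finite_answers)

lemma card_eq_le1:
  assumes "finite A" "finite B" "\<forall>x\<in>A. \<forall>y\<in>A. x = y" "\<forall>x\<in>B. \<forall>y\<in>B. x = y" "A = {} \<longleftrightarrow> B = {}"
  shows "card A = card B"
proof (cases "A = {}")
  case True then show ?thesis using assms by simp
next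
  case False
  then obtain a b where "a \<in> A" "b \<in> B" using assms(5) by blast
  then have "A = {a}" "B = {b}" using assms(3,4) by blast+
  then show ?thesis by simp
qed

lemma Zset_win:
  assumes m: "m \<ge> 2" and Z: "(a, q) \<in> Zset m"
  shows "win m q a"
proof -
  have m1: "m \<ge> 1" using m by simp
  obtain K where K: "K \<in> Ksym m" "\<forall>i<m. a i = restrict K (Xset m i (q!i))"
    and p: "prod (a 0) (Xset m 0 (q!0)) = sgn_bit (q!0)" using Z by (auto simp: Zset_iff)
  have prods: "prod (a i) (Xset m i (q!i)) = 1" if i: "i \<in> {1..<m}" for i
  proof -
    have "a i = restrict K (Xset m i (q!i))" using K(2) i by simp
    then have "prod (a i) (Xset m i (q!i)) = prod K (Xset m i (q!i))"
      by (simp add: prod_restrict_same)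
    also have "\<dots> = 1" using prod_Xi_sym[OF m1 _ K(1)] i by simp
    finally show ?thesis .
  qed
  have cons: "a i x = a j x" if "i < m" "j < m" "x \<in> Xset m i (q!i) \<inter> Xset m j (q!j)" for i j x
  proof -
    have "a i = restrict K (Xset m i (q!i))" "a j = restrict K (Xset m j (q!j))"
      using K(2) that(1,2) by blast+
    then show ?thesis using that(3) by simp
  qed
  show ?thesis unfolding win_def using p prods cons by blast
qed

theorem mainTheorem4:
  fixes m :: nat
  assumes "m \<ge> 2"
  shows
   "(\<forall>q\<in>cube m. (\<forall>a. Pcorr m a q \<ge> 0) \<and> (\<Sum>a\<in>answer_tuples m q. Pcorr m a q) = 1)
    \<and> (\<forall>i<m. \<forall>q\<in>cube m. \<forall>q'\<in>cube m. (\<forall>j<m. j \<noteq> i \<longrightarrow> q ! j = q' ! j) \<longrightarrow>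
          (\<forall>b \<in> (\<Pi>\<^sub>E j\<in>{..<m} - {i}. answers m j (q ! j)).
             (\<Sum>f\<in>answers m i (q ! i). Pcorr m (b(i := f)) q)
           = (\<Sum>f\<in>answers m i (q' ! i). Pcorr m (b(i := f)) q')))
    \<and> (\<forall>q\<in>cube m. \<forall>a\<in>answer_tuples m q. Pcorr m a q > 0 \<longrightarrow> win m q a)
    \<and> (\<Sum>q\<in>cube m. (1 / 2 ^ m) *
          (\<Sum>a\<in>answer_tuples m q. if win m q a then Pcorr m a q else 0)) = (1::real)"
proof -
  have m1: "m \<ge> 1" using assms by simp
  define c0 :: real where "c0 = 1 / 2 ^ (2 ^ (m - 1) - 1)"
  have P: "Pcorr m a q = (if (a, q) \<in> Zset m then c0 else 0)" for a q
    by (simp add: Pcorr_def c0_def)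
  have nonneg: "Pcorr m a q \<ge> 0" for a q by (simp add: P c0_def)
  have sum1: "(\<Sum>a\<in>answer_tuples m q. Pcorr m a q) = 1" if q: "q \<in> cube m" for q
  proof -
    have "(\<Sum>a\<in>answer_tuples m q. Pcorr m a q)
          = real (card {a \<in> answer_tuples m q. (a, q) \<in> Zset m}) * c0"
      unfolding P by (rule sum_if_const[OF finite_answer_tuples])
    also have "\<dots> = 1" using Zset_slice_card[OF m1 q] by (simp add: c0_def)
    finally show ?thesis .
  qed
  have ns: "(\<Sum>f\<in>answers m i (q ! i). Pcorr m (b(i := f)) q)
           = (\<Sum>f\<in>answers m i (q' ! i). Pcorr m (b(i := f)) q')"
    if i: "i < m" and q: "q \<in> cube m" and q': "q' \<in> cube m"
      and agr: "\<forall>j<m. j \<noteq> i \<longrightarrow> q ! j = q' ! j" for i q q' and b :: "nat \<Rightarrow> bool list \<Rightarrow> int"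
  proof (cases "q ! i = q' ! i")
    case True
    have "q = q'"
    proof (rule nth_equalityI)
      show "length q = length q'" using q q' by (simp add: cube_def)
      fix j assume "j < length q"
      then have "j < m" using q by (simp add: cube_def)
      then show "q ! j = q' ! j" using agr True by (cases "j = i") auto
    qed
    then show ?thesis by simp
  next
    case False
    then have fl: "q' ! i = (\<not> q ! i)" by auto
    have agr': "\<forall>j<m. j \<noteq> i \<longrightarrow> q' ! j = q ! j" using agr by auto
    have fl': "q ! i = (\<not> q' ! i)" using fl by auto
    let ?F = "\<lambda>q. {f \<in> answers m i (q ! i). (b(i := f), q) \<in> Zset m}"
    have s: "(\<Sum>f\<in>answers m i (r ! i). Pcorr m (b(i := f)) r) = real (card (?F r)) * c0" for r
      unfolding P by (rule sum_if_const[OF finite_answers])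
    have "card (?F q) = card (?F q')"
    proof (rule card_eq_le1)
      show "finite (?F q)" "finite (?F q')" using finite_answers by simp_all
      show "\<forall>x\<in>?F q. \<forall>y\<in>?F q. x = y" using F_unique[OF assms i q] by blast
      show "\<forall>x\<in>?F q'. \<forall>y\<in>?F q'. x = y" using F_unique[OF assms i q'] by blast
      show "?F q = {} \<longleftrightarrow> ?F q' = {}"
        using F_transfer[OF assms i q q' agr fl] F_transfer[OF assms i q' q agr' fl'] by blast
    qed
    then show ?thesis using s[of q] s[of q'] by simp
  qed
  have wins: "win m q a" if "Pcorr m a q > 0" for q a
  proof -
    have "(a, q) \<in> Zset m" using that by (simp add: P split: if_splits)
    then show ?thesis using Zset_win[OF assms] by blast
  qed
  have tot: "(\<Sum>q\<in>cube m. (1 / 2 ^ m) *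
          (\<Sum>a\<in>answer_tuples m q. if win m q a then Pcorr m a q else 0)) = (1::real)"
  proof -
    have "(\<Sum>q\<in>cube m. (1 / 2 ^ m) *
          (\<Sum>a\<in>answer_tuples m q. if win m q a then Pcorr m a q else 0))
        = (\<Sum>q\<in>cube m. (1 / 2 ^ m :: real))"
    proof (rule sum.cong[OF refl])
      fix q assume q: "q \<in> cube m"
      have "(\<Sum>a\<in>answer_tuples m q. if win m q a then Pcorr m a q else 0)
            = (\<Sum>a\<in>answer_tuples m q. Pcorr m a q)"
      proof (rule sum.cong[OF refl])
        fix a
        show "(if win m q a then Pcorr m a q else 0) = Pcorr m a q"
        proof -
          have w: "Pcorr m a q > 0 \<Longrightarrow> win m q a" by (rule wins)
          have n: "Pcorr m a q \<ge> 0" by (rule nonneg)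
          show ?thesis
          proof (cases "win m q a")
            case True then show ?thesis by simp
          next
            case False
            then have "\<not> Pcorr m a q > 0" using w by blast
            then have "Pcorr m a q = 0" using n by linarith
            then show ?thesis using False by simp
          qed
        qed
      qed
      then show "(1 / 2 ^ m) * (\<Sum>a\<in>answer_tuples m q. if win m q a then Pcorr m a q else 0)
            = (1 / 2 ^ m :: real)" using sum1[OF q] by simp
    qed
    also have "\<dots> = 1" by (simp add: card_cube)
    finally show ?thesis .
  qed
  have A: "\<forall>q\<in>cube m. (\<forall>a. Pcorr m a q \<ge> 0) \<and> (\<Sum>a\<in>answer_tuples m q. Pcorr m a q) = 1"
    using nonneg sum1 by blast
  have B: "\<forall>i<m. \<forall>q\<in>cube m. \<forall>q'\<in>cube m. (\<forall>j<m. j \<noteq> i \<longrightarrow> q ! j = q' ! j) \<longrightarrow>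
          (\<forall>b \<in> (\<Pi>\<^sub>E j\<in>{..<m} - {i}. answers m j (q ! j)).
             (\<Sum>f\<in>answers m i (q ! i). Pcorr m (b(i := f)) q)
           = (\<Sum>f\<in>answers m i (q' ! i). Pcorr m (b(i := f)) q'))"
  proof (intro allI impI ballI)
    fix i q q' b
    assume "i < m" "q \<in> cube m" "q' \<in> cube m" "\<forall>j<m. j \<noteq> i \<longrightarrow> q ! j = q' ! j"
    then show "(\<Sum>f\<in>answers m i (q ! i). Pcorr m (b(i := f)) q)
           = (\<Sum>f\<in>answers m i (q' ! i). Pcorr m (b(i := f)) q')" by (rule ns)
  qed
  have C: "\<forall>q\<in>cube m. \<forall>a\<in>answer_tuples m q. Pcorr m a q > 0 \<longrightarrow> win m q a"
    using wins by blast
  show ?thesis by (intro conjI A B C tot)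
qed

end
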